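(* Let $(A,\cdot,\alpha)$ be a Hom-associative algebra, $(V,l,r,\beta)$ an $A$-bimodule and $T:V\to A$ an $\mathcal{O}$-operator associated to $(V,l,r,\beta)$. Define $u\ast v:=l(T(u))v-r(T(u))v$ for $u,v\in V$. Then $(V,\ast,\beta)$ is a Hom-preLie algebra.
   Context: A Hom-associative algebra $(A,\cdot,\alpha)$: $\cdot$ bilinear, $\alpha$ linear, $(x\cdot y)\cdot\alpha(z)=\alpha(x)\cdot(y\cdot z)$. An $A$-bimodule $(V,l,r,\beta)$: a vector space $V$, linear $\beta:V\to V$, linear maps $l,r:A\to\mathfrak{gl}(V)$ with $l(x\cdot y)\beta=l(\alpha(x))l(y)$, $r(\alpha(y))l(x)=l(\alpha(x))r(y)$, $r(\alpha(y))r(x)=r(x\cdot y)\beta$ for all $x,y\in A$. An $\mathcal{O}$-operator associated to $(V,l,r,\beta)$ is a linear $T:V\to A$ with $\alpha T=T\beta$ and $T(u)\cdot T(v)=T(l(T(u))v+r(T(v))u)$ for all $u,v\in V$. A Hom-preLie algebra $(S,\ast,\beta)$: $\ast$ bilinear, $\beta$ linear, $(u\ast v)\ast\beta(w)-\beta(u)\ast(v\ast w)=(v\ast u)\ast\beta(w)-\beta(v)\ast(u\ast w)$ for all $u,v,w$. *)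

theory Defs
  imports Main "HOL.Vector_Spaces"
begin

definition bilinear_map ::
  "('k::field \<Rightarrow> 'a::ab_group_add \<Rightarrow> 'a) \<Rightarrow> ('k \<Rightarrow> 'b::ab_group_add \<Rightarrow> 'b) \<Rightarrow>
   ('k \<Rightarrow> 'c::ab_group_add \<Rightarrow> 'c) \<Rightarrow> ('a \<Rightarrow> 'b \<Rightarrow> 'c) \<Rightarrow> bool" where
  "bilinear_map sA sB sC m \<longleftrightarrow>
     (\<forall>x. Vector_Spaces.linear sB sC (m x)) \<and> (\<forall>y. Vector_Spaces.linear sA sC (\<lambda>x. m x y))"

definition hom_assoc_algebra ::
  "('k::field \<Rightarrow> 'a::ab_group_add \<Rightarrow> 'a) \<Rightarrow> ('a \<Rightarrow> 'a \<Rightarrow> 'a) \<Rightarrow> ('a \<Rightarrow> 'a) \<Rightarrow> bool" where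
  "hom_assoc_algebra sA mult alpha \<longleftrightarrow>
     vector_space sA \<and> bilinear_map sA sA sA mult \<and> Vector_Spaces.linear sA sA alpha \<and>
     (\<forall>x y z. mult (mult x y) (alpha z) = mult (alpha x) (mult y z))"

text \<open>l, r : A \<rightarrow> gl(V) are represented as curried maps 'a => 'v => 'v,
  linear in both arguments (i.e. linear maps A \<rightarrow> gl(V)).\<close>
definition hom_bimodule ::
  "('k::field \<Rightarrow> 'a::ab_group_add \<Rightarrow> 'a) \<Rightarrow> ('a \<Rightarrow> 'a \<Rightarrow> 'a) \<Rightarrow> ('a \<Rightarrow> 'a) \<Rightarrow>
   ('k \<Rightarrow> 'v::ab_group_add \<Rightarrow> 'v) \<Rightarrow> ('a \<Rightarrow> 'v \<Rightarrow> 'v) \<Rightarrow> ('a \<Rightarrow> 'v \<Rightarrow> 'v) \<Rightarrow> ('v \<Rightarrow> 'v) \<Rightarrow> bool" where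
  "hom_bimodule sA mult alpha sV l r beta \<longleftrightarrow>
     vector_space sV \<and> Vector_Spaces.linear sV sV beta \<and>
     bilinear_map sA sV sV l \<and> bilinear_map sA sV sV r \<and>
     (\<forall>x y v. l (mult x y) (beta v) = l (alpha x) (l y v)) \<and>
     (\<forall>x y v. r (alpha y) (l x v) = l (alpha x) (r y v)) \<and>
     (\<forall>x y v. r (alpha y) (r x v) = r (mult x y) (beta v))"

definition O_operator ::
  "('k::field \<Rightarrow> 'a::ab_group_add \<Rightarrow> 'a) \<Rightarrow> ('a \<Rightarrow> 'a \<Rightarrow> 'a) \<Rightarrow> ('a \<Rightarrow> 'a) \<Rightarrow>
   ('k \<Rightarrow> 'v::ab_group_add \<Rightarrow> 'v) \<Rightarrow> ('a \<Rightarrow> 'v \<Rightarrow> 'v) \<Rightarrow> ('a \<Rightarrow> 'v \<Rightarrow> 'v) \<Rightarrow> ('v \<Rightarrow> 'v) \<Rightarrow>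
   ('v \<Rightarrow> 'a) \<Rightarrow> bool" where
  "O_operator sA mult alpha sV l r beta T \<longleftrightarrow>
     Vector_Spaces.linear sV sA T \<and> (\<forall>v. alpha (T v) = T (beta v)) \<and>
     (\<forall>u v. mult (T u) (T v) = T (l (T u) v + r (T v) u))"

definition hom_prelie ::
  "('k::field \<Rightarrow> 'v::ab_group_add \<Rightarrow> 'v) \<Rightarrow> ('v \<Rightarrow> 'v \<Rightarrow> 'v) \<Rightarrow> ('v \<Rightarrow> 'v) \<Rightarrow> bool" where
  "hom_prelie sV pm beta \<longleftrightarrow>
     vector_space sV \<and> bilinear_map sV sV sV pm \<and> Vector_Spaces.linear sV sV beta \<and>
     (\<forall>u v w. pm (pm u v) (beta w) - pm (beta u) (pm v w) =
              pm (pm v u) (beta w) - pm (beta v) (pm u w))"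

end

theory Submission
  imports Defs
begin

lemma add_diff_hom:
  fixes f :: "'a::ab_group_add \<Rightarrow> 'b::ab_group_add"
  assumes "\<forall>x y. f (x + y) = f x + f y"
  shows "f (x - y) = f x - f y"
proof -
  have "f x = f ((x - y) + y)" by simp
  also have "\<dots> = f (x - y) + f y" using assms by blast
  finally show ?thesis by (simp add: algebra_simps)
qed

theorem mainTheorem16:
  fixes sA :: "'k::field \<Rightarrow> 'a::ab_group_add \<Rightarrow> 'a"
    and sV :: "'k \<Rightarrow> 'v::ab_group_add \<Rightarrow> 'v"
    and mult :: "'a \<Rightarrow> 'a \<Rightarrow> 'a" and alpha :: "'a \<Rightarrow> 'a"
    and l r :: "'a \<Rightarrow> 'v \<Rightarrow> 'v" and beta :: "'v \<Rightarrow> 'v" and T :: "'v \<Rightarrow> 'a"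
  assumes "hom_assoc_algebra sA mult alpha"
    and "hom_bimodule sA mult alpha sV l r beta"
    and "O_operator sA mult alpha sV l r beta T"
  shows "hom_prelie sV (\<lambda>u v. l (T u) v - r (T u) v) beta"
proof -
  from assms have vA: "vector_space sA" and vV: "vector_space sV"
    unfolding hom_assoc_algebra_def hom_bimodule_def by auto
  from assms have linb: "Vector_Spaces.linear sV sV beta"
    unfolding hom_bimodule_def by auto
  from assms have linT: "Vector_Spaces.linear sV sA T"
    unfolding O_operator_def by auto
  from assms have bl: "bilinear_map sA sV sV l" and br: "bilinear_map sA sV sV r"
    unfolding hom_bimodule_def by auto
  have Tadd: "\<forall>x y. T (x + y) = T x + T y" and Tsc: "\<forall>c x. T (sV c x) = sA c (T x)"
    using linT unfolding linear_iff by auto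
  have l2add: "\<forall>v w. l x (v + w) = l x v + l x w" and l2sc: "\<forall>c v. l x (sV c v) = sV c (l x v)" for x
    using bl unfolding bilinear_map_def linear_iff by auto
  have r2add: "\<forall>v w. r x (v + w) = r x v + r x w" and r2sc: "\<forall>c v. r x (sV c v) = sV c (r x v)" for x
    using br unfolding bilinear_map_def linear_iff by auto
  have l1add: "\<forall>x y. l (x + y) v = l x v + l y v" and l1sc: "\<forall>c x. l (sA c x) v = sV c (l x v)" for v
  proof -
    have "Vector_Spaces.linear sA sV (\<lambda>x. l x v)" using bl unfolding bilinear_map_def by auto
    then show "\<forall>x y. l (x + y) v = l x v + l y v" "\<forall>c x. l (sA c x) v = sV c (l x v)"
      unfolding linear_iff by auto
  qed
  have r1add: "\<forall>x y. r (x + y) v = r x v + r y v" and r1sc: "\<forall>c x. r (sA c x) v = sV c (r x v)" for v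
  proof -
    have "Vector_Spaces.linear sA sV (\<lambda>x. r x v)" using br unfolding bilinear_map_def by auto
    then show "\<forall>x y. r (x + y) v = r x v + r y v" "\<forall>c x. r (sA c x) v = sV c (r x v)"
      unfolding linear_iff by auto
  qed
  have Tdiff: "T (x - y) = T x - T y" for x y by (rule add_diff_hom[OF Tadd])
  have l2diff: "l x (v - w) = l x v - l x w" for x v w by (rule add_diff_hom[OF l2add])
  have r2diff: "r x (v - w) = r x v - r x w" for x v w by (rule add_diff_hom[OF r2add])
  have l1diff: "l (x - y) v = l x v - l y v" for x y v
    using add_diff_hom[of "\<lambda>x. l x v", OF l1add] .
  have r1diff: "r (x - y) v = r x v - r y v" for x y v
    using add_diff_hom[of "\<lambda>x. r x v", OF r1add] .
  have scdiff: "sV c (a - b) = sV c a - sV c b" for c a b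
    proof - interpret vector_space sV by (rule vV) show ?thesis by (rule scale_right_diff_distrib) qed
  have R1: "l (mult x y) (beta v) = l (alpha x) (l y v)"
   and R2: "r (alpha y) (l x v) = l (alpha x) (r y v)"
   and R3: "r (alpha y) (r x v) = r (mult x y) (beta v)" for x y v
    using assms(2) unfolding hom_bimodule_def by auto
  have Ta: "alpha (T v) = T (beta v)" and TO: "mult (T u) (T v) = T (l (T u) v + r (T v) u)" for u v
    using assms(3) unfolding O_operator_def by auto
  define pm where "pm = (\<lambda>u v. l (T u) v - r (T u) v)"
  have bil: "bilinear_map sV sV sV pm"
    unfolding bilinear_map_def linear_iff pm_def
    using vV l2add r2add l2sc r2sc scdiff l1add r1add l1sc r1sc Tadd Tsc
    by (auto simp: algebra_simps)
  have key: "pm (pm u v) (beta w) - pm (beta u) (pm v w) =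
              pm (pm v u) (beta w) - pm (beta v) (pm u w)" for u v w
  proof -
    let ?x = "T u" and ?y = "T v"
    have e1: "T (pm u v) - T (pm v u) = mult ?x ?y - mult ?y ?x"
      unfolding pm_def TO Tdiff[symmetric] by (simp add: algebra_simps)
    have e2: "pm (beta u) (pm v w) - pm (beta v) (pm u w)
      = l (mult ?x ?y) (beta w) - r (mult ?x ?y) (beta w) - l (mult ?y ?x) (beta w) + r (mult ?y ?x) (beta w)"
      unfolding pm_def Ta[symmetric] l2diff r2diff R1
      using R2[of ?y ?x w] R2[of ?x ?y w] R3[of ?x ?y w] R3[of ?y ?x w]
      by (simp add: algebra_simps)
    have e3: "pm (pm u v) (beta w) - pm (pm v u) (beta w)
      = l (T (pm u v) - T (pm v u)) (beta w) - r (T (pm u v) - T (pm v u)) (beta w)"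
      unfolding pm_def l1diff r1diff by (simp add: algebra_simps)
    have e4: "pm (pm u v) (beta w) - pm (pm v u) (beta w) = pm (beta u) (pm v w) - pm (beta v) (pm u w)"
      unfolding e3 e1 e2 l1diff r1diff by (simp add: algebra_simps)
    show ?thesis using e4 by (simp add: algebra_simps)
  qed
  show ?thesis
    unfolding hom_prelie_def pm_def[symmetric] using vV bil linb key by auto
qed

end
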